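(* In any symmetric $2\times 2$ game (a symmetric two-player game $(X,\pi)$ with $|X|=2$), imitation is essentially unbeatable.
   Context: $\pi:X\times X\to\mathbb{R}$, $\pi(x,y)$ = payoff of the player choosing $x$ against $y$. Relative payoff: $\Delta(x,y)=\pi(x,y)-\pi(y,x)$, and $\hat\Delta:=\max_{x,y\in X}\Delta(x,y)$. Imitate-the-best: given initial $y_0\in X$ and any opponent sequence $(x_t)_{t\ge0}$ in $X$, $y_t=x_{t-1}$ if $\Delta(x_{t-1},y_{t-1})>0$ and $y_t=y_{t-1}$ otherwise. Imitation is essentially unbeatable if for every $y_0\in X$ and every sequence $(x_t)$, $\limsup_{T\to\infty}\sum_{t=0}^T\Delta(x_t,y_t)\le\hat\Delta$. *)

theory Defs
  imports "HOL-Analysis.Analysis"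
begin

text \<open>A symmetric two-player game on the strategy set X = UNIV :: 'a set with payoff
  function pi, where pi x y is the payoff of the player choosing x against y.\<close>

definition rel_payoff :: "('a \<Rightarrow> 'a \<Rightarrow> real) \<Rightarrow> 'a \<Rightarrow> 'a \<Rightarrow> real" where
  "rel_payoff \<pi> x y = \<pi> x y - \<pi> y x"

definition max_rel_payoff :: "('a::finite \<Rightarrow> 'a \<Rightarrow> real) \<Rightarrow> real" where
  "max_rel_payoff \<pi> = Max {rel_payoff \<pi> x y | x y. True}"

primrec imitate :: "('a \<Rightarrow> 'a \<Rightarrow> real) \<Rightarrow> 'a \<Rightarrow> (nat \<Rightarrow> 'a) \<Rightarrow> nat \<Rightarrow> 'a" where
  "imitate \<pi> y0 xs 0 = y0"
| "imitate \<pi> y0 xs (Suc t) =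
     (if rel_payoff \<pi> (xs t) (imitate \<pi> y0 xs t) > 0 then xs t else imitate \<pi> y0 xs t)"

definition imitation_essentially_unbeatable :: "('a::finite \<Rightarrow> 'a \<Rightarrow> real) \<Rightarrow> bool" where
  "imitation_essentially_unbeatable \<pi> \<longleftrightarrow>
     (\<forall>y0 xs. limsup (\<lambda>T. ereal (\<Sum>t\<le>T. rel_payoff \<pi> (xs t) (imitate \<pi> y0 xs t)))
                \<le> ereal (max_rel_payoff \<pi>))"

end

theory Submission
  imports Defs
begin

lemma rp_le_max:
  fixes \<pi> :: "'a::finite \<Rightarrow> 'a \<Rightarrow> real"
  shows "rel_payoff \<pi> x y \<le> max_rel_payoff \<pi>"
proof -
  have "{rel_payoff \<pi> x y | x y. True} = (\<lambda>(x,y). rel_payoff \<pi> x y) ` UNIV" by auto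
  hence fin: "finite {rel_payoff \<pi> x y | x y. True}" by simp
  show ?thesis unfolding max_rel_payoff_def by (rule Max_ge[OF fin]) auto
qed

lemma max_nonneg:
  fixes \<pi> :: "'a::finite \<Rightarrow> 'a \<Rightarrow> real"
  shows "0 \<le> max_rel_payoff \<pi>"
  using rp_le_max[of \<pi> x x] by (simp add: rel_payoff_def)

lemma no_beat:
  fixes \<pi> :: "'a::finite \<Rightarrow> 'a \<Rightarrow> real"
  assumes c: "CARD('a) = 2" and h: "rel_payoff \<pi> x y > 0"
  shows "\<not> rel_payoff \<pi> z x > 0"
proof
  assume h2: "rel_payoff \<pi> z x > 0"
  have xy: "x \<noteq> y" using h by (auto simp: rel_payoff_def)
  have zx: "z \<noteq> x" using h2 by (auto simp: rel_payoff_def)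
  have zy: "z \<noteq> y" using h h2 by (auto simp: rel_payoff_def)
  have "card {x,y,z} = 3" using xy zx zy by auto
  moreover have "card {x,y,z} \<le> CARD('a)" by (rule card_mono) auto
  ultimately show False using c by simp
qed

theorem proposition2:
  fixes \<pi> :: "'a::finite \<Rightarrow> 'a \<Rightarrow> real"
  assumes "CARD('a) = 2"
  shows "imitation_essentially_unbeatable \<pi>"
  unfolding imitation_essentially_unbeatable_def
proof (intro allI)
  fix y0 xs
  let ?M = "max_rel_payoff \<pi>"
  let ?y = "imitate \<pi> y0 xs"
  define B where "B y = (if \<exists>x. rel_payoff \<pi> x y > 0 then 0 else ?M)" for y
  have BM: "B y \<le> ?M" for y using max_nonneg[of \<pi>] by (simp add: B_def)
  have inv: "(\<Sum>t<T. rel_payoff \<pi> (xs t) (?y t)) \<le> B (?y T)" for T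
  proof (induction T)
    case 0
    then show ?case using max_nonneg[of \<pi>] by (simp add: B_def)
  next
    case (Suc T)
    show ?case
    proof (cases "rel_payoff \<pi> (xs T) (?y T) > 0")
      case True
      hence "B (?y T) = 0" by (auto simp: B_def)
      moreover have "B (xs T) = ?M" using no_beat[OF assms True] by (auto simp: B_def)
      ultimately show ?thesis using Suc True rp_le_max[of \<pi> "xs T" "?y T"] by simp
    next
      case False
      then show ?thesis using Suc by simp
    qed
  qed
  have "ereal (\<Sum>t\<le>T. rel_payoff \<pi> (xs t) (?y t)) \<le> ereal ?M" for T
    using inv[of "Suc T"] BM[of "?y (Suc T)"] by (simp add: lessThan_Suc_atMost)
  thus "limsup (\<lambda>T. ereal (\<Sum>t\<le>T. rel_payoff \<pi> (xs t) (?y t))) \<le> ereal ?M"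
    by (intro Limsup_bounded) auto
qed

end
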